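(* Drift-less setting with target $\rho_d=|\Psi\rangle\langle\Psi|$. Let $D_k=D_{\mathcal N_k}\otimes I_{\bar{\mathcal N}_k}$ be QL operators with $D_k|\Psi\rangle=0$ such that $\mathfrak D(\mathcal H_0)$ is globally asymptotically stable for $\mathcal L_D=\mathcal L(0,\{D_k\})$ (every trajectory $e^{\mathcal L_Dt}(\rho_0)$, $\rho_0\in\mathfrak D(\mathcal H)$, converges to the set $\mathfrak D(\mathcal H_0)$). Let $\mathcal H'$ be a subspace with $\mathcal H_d\subseteq\mathcal H'\subseteq\mathcal H\ominus\mathcal H_w$ such that $\mathfrak D(\mathcal H')$ is invariant under $e^{\mathcal L_Dt}$ for all $t\ge0$. Then $\rho_d$ is conditionally asymptotically stable relative to $\mathcal H'$ for $\mathcal L_D$, i.e. $\rho_d$ is $\mathcal H'$-DQLS.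
   Context: $\mathcal H=\bigotimes_{a=1}^n\mathcal H_a$ finite-dimensional; neighborhoods $\mathcal N_k\subsetneq\{1,\dots,n\}$; QL operators have the form $X\otimes I_{\bar{\mathcal N}_k}$. $\mathfrak D(\mathcal K)$: density operators supported in $\mathcal K$. $\mathcal L(0,\{D_k\})(\rho)=\sum_k(D_k\rho D_k^\dagger-\frac12\{D_k^\dagger D_k,\rho\})$. $\mathcal H_d=\mathrm{span}\{|\Psi\rangle\}$; $\rho_{\mathcal N_k}=\mathrm{Tr}_{\bar{\mathcal N}_k}\rho_d$; $\mathcal H_0=\bigcap_k\mathrm{supp}(\rho_{\mathcal N_k}\otimes I_{\bar{\mathcal N}_k})$; $\mathcal H_w=\mathcal H_0\ominus\mathcal H_d$. Conditional asymptotic stability relative to $\mathcal H'$: $e^{\mathcal L_Dt}(\rho_0)\to\rho_d$ for all $\rho_0\in\mathfrak D(\mathcal H')$. *)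

theory Defs
  imports "HOL-Analysis.Analysis" "Jordan_Normal_Form.Matrix"
begin

text \<open>The system consists of n subsystems indexed 0..<n, subsystem a having dimension d a. A basis index j < N is identified with the
  multi-index of its mixed-radix digits (digit a is the basis label of subsystem a).\<close>

definition tdim :: "nat \<Rightarrow> (nat \<Rightarrow> nat) \<Rightarrow> nat" where
  "tdim n d = (\<Prod>a<n. d a)"

definition digit :: "(nat \<Rightarrow> nat) \<Rightarrow> nat \<Rightarrow> nat \<Rightarrow> nat" where
  "digit d a j = (j div (\<Prod>b<a. d b)) mod d a"

definition combine :: "nat \<Rightarrow> (nat \<Rightarrow> nat) \<Rightarrow> nat set \<Rightarrow> nat \<Rightarrow> nat \<Rightarrow> nat" where
  "combine n d S i j = (\<Sum>a<n. (if a \<in> S then digit d a i else digit d a j) * (\<Prod>b<a. d b))"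

definition restr :: "(nat \<Rightarrow> nat) \<Rightarrow> nat set \<Rightarrow> nat \<Rightarrow> (nat \<Rightarrow> nat)" where
  "restr d S i = (\<lambda>a. if a \<in> S then digit d a i else 0)"

text \<open>Quasi-local operator: of the form X \<otimes> I on the complement of the neighborhood S.\<close>
definition is_QL :: "nat \<Rightarrow> (nat \<Rightarrow> nat) \<Rightarrow> nat set \<Rightarrow> complex mat \<Rightarrow> bool" where
  "is_QL n d S M \<longleftrightarrow> M \<in> carrier_mat (tdim n d) (tdim n d) \<and>
     (\<exists>X :: (nat \<Rightarrow> nat) \<Rightarrow> (nat \<Rightarrow> nat) \<Rightarrow> complex.
        \<forall>i < tdim n d. \<forall>j < tdim n d.
          M $$ (i, j) = (if (\<forall>a<n. a \<notin> S \<longrightarrow> digit d a i = digit d a j)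
                         then X (restr d S i) (restr d S j) else 0))"

text \<open>Reduced state on S, tensored with the identity on the complement:
  (Tr_{complement of S} rho) \<otimes> I.\<close>
definition red_ext :: "nat \<Rightarrow> (nat \<Rightarrow> nat) \<Rightarrow> nat set \<Rightarrow> complex mat \<Rightarrow> complex mat" where
  "red_ext n d S \<rho> = mat (tdim n d) (tdim n d) (\<lambda>(i, j).
     if (\<forall>a<n. a \<notin> S \<longrightarrow> digit d a i = digit d a j)
     then (\<Sum>l \<in> {l. l < tdim n d \<and> (\<forall>a<n. a \<in> S \<longrightarrow> digit d a l = 0)}.
             \<rho> $$ (combine n d S i l, combine n d S j l))
     else 0)"

definition dag :: "complex mat \<Rightarrow> complex mat" where
  "dag A = mat (dim_col A) (dim_row A) (\<lambda>(i, j). cnj (A $$ (j, i)))"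

definition ip :: "complex vec \<Rightarrow> complex vec \<Rightarrow> complex" where
  "ip v w = (\<Sum>i<dim_vec v. cnj (v $ i) * w $ i)"

definition ket_bra :: "complex vec \<Rightarrow> complex mat" where
  "ket_bra v = mat (dim_vec v) (dim_vec v) (\<lambda>(i, j). v $ i * cnj (v $ j))"

definition is_subspace :: "nat \<Rightarrow> complex vec set \<Rightarrow> bool" where
  "is_subspace N V \<longleftrightarrow> V \<subseteq> carrier_vec N \<and> 0\<^sub>v N \<in> V \<and>
     (\<forall>v\<in>V. \<forall>w\<in>V. v + w \<in> V) \<and> (\<forall>c. \<forall>v\<in>V. c \<cdot>\<^sub>v v \<in> V)"

definition supp :: "nat \<Rightarrow> complex mat \<Rightarrow> complex vec set" where
  "supp N A = {A *\<^sub>v x | x. x \<in> carrier_vec N}"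

definition ortho_compl :: "nat \<Rightarrow> complex vec set \<Rightarrow> complex vec set" where
  "ortho_compl N V = {v \<in> carrier_vec N. \<forall>w\<in>V. ip w v = 0}"

definition density_ops :: "nat \<Rightarrow> complex vec set \<Rightarrow> complex mat set" where
  "density_ops N K = {\<rho> \<in> carrier_mat N N. dag \<rho> = \<rho> \<and>
      (\<forall>v \<in> carrier_vec N. 0 \<le> Re (ip v (\<rho> *\<^sub>v v))) \<and>
      (\<Sum>i<N. \<rho> $$ (i, i)) = 1 \<and> supp N \<rho> \<subseteq> K}"

definition lindblad :: "nat \<Rightarrow> nat \<Rightarrow> (nat \<Rightarrow> complex mat) \<Rightarrow> complex mat \<Rightarrow> complex mat" where
  "lindblad N m D \<rho> = mat N N (\<lambda>(i, j). \<Sum>k<m.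
     (D k * \<rho> * dag (D k)
      - (1/2 :: complex) \<cdot>\<^sub>m (dag (D k) * D k * \<rho> + \<rho> * (dag (D k) * D k))) $$ (i, j))"

definition evol :: "nat \<Rightarrow> (complex mat \<Rightarrow> complex mat) \<Rightarrow> real \<Rightarrow> complex mat \<Rightarrow> complex mat" where
  "evol N L t \<rho> = mat N N (\<lambda>(i, j).
     \<Sum>k. (complex_of_real (t ^ k / fact k)) * ((L ^^ k) \<rho>) $$ (i, j))"

text \<open>Convergence of matrices (entrywise; all norms are equivalent in finite dimension).\<close>
definition mat_tendsto :: "nat \<Rightarrow> (real \<Rightarrow> complex mat) \<Rightarrow> complex mat \<Rightarrow> bool" where
  "mat_tendsto N f A \<longleftrightarrow> (\<forall>i<N. \<forall>j<N. ((\<lambda>t. f t $$ (i, j)) \<longlongrightarrow> A $$ (i, j)) at_top)"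

definition mat_tendsto_set :: "nat \<Rightarrow> (real \<Rightarrow> complex mat) \<Rightarrow> complex mat set \<Rightarrow> bool" where
  "mat_tendsto_set N f S \<longleftrightarrow> (\<forall>e>0. \<exists>T. \<forall>t\<ge>T. \<exists>\<sigma>\<in>S.
      \<forall>i<N. \<forall>j<N. cmod (f t $$ (i, j) - \<sigma> $$ (i, j)) < e)"

definition Hd :: "complex vec \<Rightarrow> complex vec set" where
  "Hd \<Psi> = {c \<cdot>\<^sub>v \<Psi> | c. True}"

definition H0 :: "nat \<Rightarrow> (nat \<Rightarrow> nat) \<Rightarrow> nat \<Rightarrow> (nat \<Rightarrow> nat set) \<Rightarrow> complex vec \<Rightarrow> complex vec set" where
  "H0 n d m Nb \<Psi> = carrier_vec (tdim n d) \<inter>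
     (\<Inter>k\<in>{..<m}. supp (tdim n d) (red_ext n d (Nb k) (ket_bra \<Psi>)))"

definition Hw :: "nat \<Rightarrow> (nat \<Rightarrow> nat) \<Rightarrow> nat \<Rightarrow> (nat \<Rightarrow> nat set) \<Rightarrow> complex vec \<Rightarrow> complex vec set" where
  "Hw n d m Nb \<Psi> = H0 n d m Nb \<Psi> \<inter> ortho_compl (tdim n d) (Hd \<Psi>)"

definition cond_asym_stable :: "nat \<Rightarrow> (complex mat \<Rightarrow> complex mat) \<Rightarrow> complex mat \<Rightarrow> complex vec set \<Rightarrow> bool" where
  "cond_asym_stable N L \<rho>d H' \<longleftrightarrow>
     (\<forall>\<rho>0 \<in> density_ops N H'. mat_tendsto N (\<lambda>t. evol N L t \<rho>0) \<rho>d)"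

end

theory Submission
  imports Defs
begin
unbundle no vec_syntax

lemma mv_idx: "A \<in> carrier_mat N N \<Longrightarrow> v \<in> carrier_vec N \<Longrightarrow> i < N \<Longrightarrow>
   (A *\<^sub>v v) $ i = (\<Sum>l<N. A $$ (i,l) * v $ l)"
  by (auto simp: scalar_prod_def row_def atLeast0LessThan intro!: sum.cong)

lemma herm_entry: assumes "dag A = A" "A \<in> carrier_mat N N" "i<N" "j<N"
  shows "A$$(i,j) = cnj (A$$(j,i))"
proof -
  have "dag A $$ (i,j) = cnj (A$$(j,i))" using assms(2-4) by (simp add: dag_def)
  then show ?thesis using assms(1) by simp
qed

lemma ip_adj: assumes "dag A = A" "A \<in> carrier_mat N N" "v \<in> carrier_vec N" "w \<in> carrier_vec N"
  shows "ip (A *\<^sub>v v) w = ip v (A *\<^sub>v w)"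
proof -
  have "ip (A *\<^sub>v v) w = (\<Sum>i<N. \<Sum>l<N. cnj (A$$(i,l)) * cnj (v$l) * w$i)"
    unfolding ip_def using assms by (simp add: mv_idx cnj_sum sum_distrib_right del: index_mult_mat_vec)
  also have "\<dots> = (\<Sum>l<N. \<Sum>i<N. cnj (v$l) * (A$$(l,i) * w$i))"
    apply (subst sum.swap)
  proof (rule sum.cong[OF refl], rule sum.cong[OF refl])
    fix l i assume "l \<in> {..<N}" "i \<in> {..<N}"
    then have "A$$(l,i) = cnj (A$$(i,l))" using herm_entry[OF assms(1,2), of l i] by simp
    then show "cnj (A$$(i,l)) * cnj (v$l) * w$i = cnj (v$l) * (A$$(l,i) * w$i)" by simp
  qed
  also have "\<dots> = ip v (A *\<^sub>v w)"
    unfolding ip_def using assms by (simp add: mv_idx sum_distrib_left del: index_mult_mat_vec)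
  finally show ?thesis .
qed

lemma cnj_mult_self: "cnj z * z = complex_of_real ((cmod z)^2)"
  by (subst mult.commute) (rule complex_norm_square[symmetric])

lemma ip_self_zero: assumes "v \<in> carrier_vec N" "ip v v = 0" shows "v = 0\<^sub>v N"
proof -
  have "ip v v = (\<Sum>i<N. complex_of_real ((cmod (v$i))^2))"
    unfolding ip_def using assms(1)
    by (intro sum.cong) (simp_all only: cnj_mult_self, simp)
  also have "\<dots> = complex_of_real (\<Sum>i<N. (cmod (v$i))^2)" by simp
  finally have e: "ip v v = complex_of_real (\<Sum>i<N. (cmod (v$i))^2)" .
  have "(\<Sum>i<N. (cmod (v$i))^2) = 0" using e assms(2) by (metis of_real_eq_0_iff)
  then have z: "\<forall>i<N. (cmod (v$i))^2 = 0" using sum_nonneg_eq_0_iff[of "{..<N}" "\<lambda>i. (cmod (v$i))^2"] by simp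
  show ?thesis
  proof (rule eq_vecI)
    fix i assume "i < dim_vec (0\<^sub>v N)" then have i: "i<N" by simp
    then have "cmod (v$i) = 0" using z by simp
    then show "v$i = 0\<^sub>v N $ i" using i by simp
  next
    show "dim_vec v = dim_vec (0\<^sub>v N)" using assms(1) by simp
  qed
qed

lemma kill: assumes "\<rho> \<in> density_ops N K" "x \<in> carrier_vec N" "\<forall>h\<in>K. ip x h = 0"
  shows "\<rho> *\<^sub>v x = 0\<^sub>v N"
proof -
  have rc: "\<rho> \<in> carrier_mat N N" and h: "dag \<rho> = \<rho>" and s: "supp N \<rho> \<subseteq> K"
    using assms(1) by (auto simp: density_ops_def)
  define y where "y = \<rho> *\<^sub>v x"
  have yc: "y \<in> carrier_vec N" using rc assms(2) y_def by simp
  have "\<rho> *\<^sub>v y \<in> K" using s yc unfolding supp_def by blast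
  then have "ip x (\<rho> *\<^sub>v y) = 0" using assms(3) by blast
  then have "ip y y = 0" using ip_adj[OF h rc assms(2) yc] y_def by simp
  then have "y = 0\<^sub>v N" by (rule ip_self_zero[OF yc])
  then show ?thesis unfolding y_def .
qed

lemma dens_D: assumes "\<rho> \<in> density_ops N K"
  shows "\<rho> \<in> carrier_mat N N" "dag \<rho> = \<rho>" "\<And>v. v \<in> carrier_vec N \<Longrightarrow> 0 \<le> Re (ip v (\<rho> *\<^sub>v v))"
    "(\<Sum>i<N. \<rho> $$ (i, i)) = 1" "supp N \<rho> \<subseteq> K"
  using assms by (auto simp: density_ops_def)

lemma mv_unit: fixes A :: "complex mat" assumes "A \<in> carrier_mat N N" "i < N" "k < N"
  shows "(A *\<^sub>v unit_vec N i) $ k = A $$ (k, i)"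
  using assms by (simp add: mv_idx if_distrib sum.delta cong: if_cong del: index_mult_mat_vec)

lemma ip_unit: assumes "w \<in> carrier_vec N" "i < N"
  shows "ip (unit_vec N i) w = w $ i"
proof -
  have "ip (unit_vec N i) w = (\<Sum>k<N. if k = i then w$k else 0)"
    unfolding ip_def using assms by (intro sum.cong) auto
  then show ?thesis using assms by simp
qed

lemma ip_two: assumes "w \<in> carrier_vec N" "i < N" "j < N" "i \<noteq> j"
  shows "ip (unit_vec N i + b \<cdot>\<^sub>v unit_vec N j) w = w $ i + cnj b * w $ j"
proof -
  have "ip (unit_vec N i + b \<cdot>\<^sub>v unit_vec N j) w
     = (\<Sum>k<N. (if k = i then w$k else 0) + (if k = j then cnj b * w$k else 0))"
    unfolding ip_def using assms by (intro sum.cong) (auto simp: distrib_right)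
  also have "\<dots> = w $ i + cnj b * w $ j" using assms by (simp add: sum.distrib)
  finally show ?thesis .
qed

lemma diag_props: assumes "\<rho> \<in> density_ops N K" "i < N"
  shows "0 \<le> Re (\<rho> $$ (i,i))" "Im (\<rho> $$ (i,i)) = 0"
proof -
  note d = dens_D[OF assms(1)]
  have "(\<rho> *\<^sub>v unit_vec N i) \<in> carrier_vec N" using d(1) by simp
  then have "ip (unit_vec N i) (\<rho> *\<^sub>v unit_vec N i) = \<rho> $$ (i,i)"
    using ip_unit mv_unit[OF d(1) assms(2) assms(2)] assms(2) by simp
  then show "0 \<le> Re (\<rho> $$ (i,i))" using d(3)[of "unit_vec N i"] assms(2) by simp
  have "\<rho> $$ (i,i) = cnj (\<rho> $$ (i,i))" using herm_entry[OF d(2) d(1) assms(2) assms(2)] .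
  then show "Im (\<rho> $$ (i,i)) = 0" by (metis cnj.simps(2) neg_equal_zero)
qed

lemma trace_re: assumes "\<rho> \<in> density_ops N K"
  shows "(\<Sum>i<N. Re (\<rho> $$ (i, i))) = 1"
  using dens_D(4)[OF assms] by (metis Re_sum one_complex.sel(1))

lemma two_le_trace: assumes "\<rho> \<in> density_ops N K" "i < N" "j < N" "i \<noteq> j"
  shows "Re (\<rho> $$ (i,i)) + Re (\<rho> $$ (j,j)) \<le> 1"
proof -
  have "(\<Sum>k\<in>{i,j}. Re (\<rho> $$ (k,k))) \<le> (\<Sum>k<N. Re (\<rho> $$ (k,k)))"
    using assms diag_props(1)[OF assms(1)] by (intro sum_mono2) auto
  then show ?thesis using assms trace_re[OF assms(1)] by simp
qed

lemma offdiag: assumes "\<rho> \<in> density_ops N K" "i < N" "j < N" "i \<noteq> j"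
  shows "2 * cmod (\<rho> $$ (i,j)) \<le> Re (\<rho> $$ (i,i)) + Re (\<rho> $$ (j,j))"
proof (cases "\<rho> $$ (i,j) = 0")
  case True then show ?thesis using diag_props(1)[OF assms(1)] assms by (simp add: add_nonneg_nonneg)
next
  case False
  note d = dens_D[OF assms(1)]
  define r where "r = \<rho> $$ (i,j)"
  define b where "b = - cnj r / complex_of_real (cmod r)"
  have r0: "cmod r \<noteq> 0" using False r_def by simp
  have h1: "cnj r * r = complex_of_real (cmod r) * complex_of_real (cmod r)"
    using cnj_mult_self[of r] by (simp add: power2_eq_square)
  then have h2: "r * cnj r = complex_of_real (cmod r) * complex_of_real (cmod r)"
    by (simp add: mult.commute)
  have br: "b * r = - complex_of_real (cmod r)"
    using r0 h1 h2 unfolding b_def by (simp add: field_simps)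
  have cb: "cnj b * cnj r = - complex_of_real (cmod r)"
    using arg_cong[OF br, of cnj] by simp
  have bb: "cnj b * b = 1"
  proof -
    have "cmod b = 1" using r0 unfolding b_def by (simp add: norm_divide)
    then show ?thesis by (simp add: cnj_mult_self)
  qed
  define v where "v = unit_vec N i + b \<cdot>\<^sub>v unit_vec N j"
  have vc: "v \<in> carrier_vec N" unfolding v_def by simp
  have rv: "\<rho> *\<^sub>v v = \<rho> *\<^sub>v unit_vec N i + b \<cdot>\<^sub>v (\<rho> *\<^sub>v unit_vec N j)"
    unfolding v_def using d(1)
    by (simp add: mult_add_distrib_mat_vec mult_mat_vec)
  have rvc: "\<rho> *\<^sub>v v \<in> carrier_vec N" using d(1) vc by simp
  have "ip v (\<rho> *\<^sub>v v) = (\<rho> *\<^sub>v v) $ i + cnj b * (\<rho> *\<^sub>v v) $ j"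
    unfolding v_def using ip_two[OF rvc[unfolded v_def] assms(2-4)] by simp
  also have "\<dots> = \<rho>$$(i,i) + b * \<rho>$$(i,j) + cnj b * (\<rho>$$(j,i) + b * \<rho>$$(j,j))"
    unfolding rv using assms d(1) by (simp add: mv_unit del: index_mult_mat_vec)
  also have "\<rho>$$(j,i) = cnj r" unfolding r_def by (rule herm_entry[OF d(2) d(1) assms(3) assms(2)])
  also have "\<rho>$$(i,i) + b * \<rho>$$(i,j) + cnj b * (cnj r + b * \<rho>$$(j,j))
     = \<rho>$$(i,i) + \<rho>$$(j,j) - 2 * complex_of_real (cmod r)"
    using br cb bb unfolding r_def[symmetric] by (simp add: algebra_simps)
  finally have "0 \<le> Re (\<rho>$$(i,i) + \<rho>$$(j,j) - 2 * complex_of_real (cmod r))"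
    using d(3)[OF vc] by simp
  then show ?thesis unfolding r_def by simp
qed

lemma dens_bound: assumes "\<rho> \<in> density_ops N K" "i < N" "j < N"
  shows "cmod (\<rho> $$ (i,j)) \<le> 1"
proof (cases "i = j")
  case True
  have "\<rho> $$ (i,i) = complex_of_real (Re (\<rho> $$ (i,i)))"
    using diag_props(2)[OF assms(1,2)] by (simp add: complex_eq_iff)
  moreover have "Re (\<rho> $$ (i,i)) \<le> 1"
  proof -
    have "(\<Sum>k\<in>{i}. Re (\<rho> $$ (k,k))) \<le> (\<Sum>k<N. Re (\<rho> $$ (k,k)))"
      using assms diag_props(1)[OF assms(1)] by (intro sum_mono2) auto
    then show ?thesis using trace_re[OF assms(1)] by simp
  qed
  ultimately show ?thesis using True diag_props(1)[OF assms(1,2)] by (metis abs_of_nonneg norm_of_real)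
next
  case False
  then show ?thesis using offdiag[OF assms False] two_le_trace[OF assms False] by simp
qed

lemma mm_idx: assumes "A \<in> carrier_mat N N" "B \<in> carrier_mat N N" "i < N" "j < N"
  shows "(A * B) $$ (i,j) = (\<Sum>l<N. A $$ (i,l) * B $$ (l,j))"
  using assms by (auto simp: scalar_prod_def row_def col_def atLeast0LessThan intro!: sum.cong)

lemma dag_carrier: "A \<in> carrier_mat N N \<Longrightarrow> dag A \<in> carrier_mat N N"
  by (simp add: dag_def)

lemma Q_carrier: "\<Psi> \<in> carrier_vec N \<Longrightarrow> ket_bra \<Psi> \<in> carrier_mat N N"
  by (simp add: ket_bra_def)

lemma Q_entry: "\<Psi> \<in> carrier_vec N \<Longrightarrow> i < N \<Longrightarrow> j < N \<Longrightarrow> ket_bra \<Psi> $$ (i,j) = \<Psi>$i * cnj (\<Psi>$j)"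
  by (simp add: ket_bra_def)

lemma Qv: assumes "\<Psi> \<in> carrier_vec N" "v \<in> carrier_vec N" "i < N"
  shows "(ket_bra \<Psi> *\<^sub>v v) $ i = \<Psi>$i * ip \<Psi> v"
proof -
  have "(ket_bra \<Psi> *\<^sub>v v) $ i = (\<Sum>l<N. ket_bra \<Psi> $$ (i,l) * v$l)"
    by (rule mv_idx[OF Q_carrier[OF assms(1)] assms(2,3)])
  also have "\<dots> = (\<Sum>l<N. \<Psi>$i * (cnj (\<Psi>$l) * v$l))"
    using assms by (intro sum.cong) (auto simp: Q_entry mult.assoc)
  also have "\<dots> = \<Psi>$i * ip \<Psi> v" unfolding ip_def using assms by (simp add: sum_distrib_left)
  finally show ?thesis .
qed

lemma ip_swap: assumes "v \<in> carrier_vec N" "w \<in> carrier_vec N"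
  shows "ip v w = cnj (ip w v)"
  unfolding ip_def using assms by (simp add: cnj_sum mult.commute)

lemma Q_dens: assumes "\<Psi> \<in> carrier_vec N" "ip \<Psi> \<Psi> = 1"
  shows "ket_bra \<Psi> \<in> density_ops N (carrier_vec N)"
proof -
  have c: "ket_bra \<Psi> \<in> carrier_mat N N" using Q_carrier[OF assms(1)] .
  have h: "dag (ket_bra \<Psi>) = ket_bra \<Psi>"
    using c assms(1) by (intro eq_matI) (auto simp: dag_def Q_entry)
  have p: "0 \<le> Re (ip v (ket_bra \<Psi> *\<^sub>v v))" if v: "v \<in> carrier_vec N" for v
  proof -
    have "ip v (ket_bra \<Psi> *\<^sub>v v) = (\<Sum>i<N. cnj (v$i) * \<Psi>$i) * ip \<Psi> v"
      unfolding ip_def using v assms(1) c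
      by (simp add: Qv[unfolded ip_def] sum_distrib_right mult.assoc del: index_mult_mat_vec)
    also have "(\<Sum>i<N. cnj (v$i) * \<Psi>$i) = ip v \<Psi>" unfolding ip_def using v by simp
    also have "ip v \<Psi> = cnj (ip \<Psi> v)" using ip_swap v assms(1) by blast
    finally show ?thesis by (simp add: cnj_mult_self)
  qed
  have t: "(\<Sum>i<N. ket_bra \<Psi> $$ (i, i)) = 1"
  proof -
    have "(\<Sum>i<N. ket_bra \<Psi> $$ (i, i)) = ip \<Psi> \<Psi>"
      unfolding ip_def using assms(1) by (intro sum.cong) (auto simp: Q_entry mult.commute)
    then show ?thesis using assms(2) by simp
  qed
  have sp: "supp N (ket_bra \<Psi>) \<subseteq> carrier_vec N" using c unfolding supp_def by auto
  show ?thesis unfolding density_ops_def using c h p t sp by auto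
qed

lemma lind_zero: assumes D: "\<forall>k<m. D k \<in> carrier_mat N N" and r: "\<rho> \<in> carrier_mat N N"
  and z: "\<forall>k<m. D k * \<rho> = 0\<^sub>m N N \<and> \<rho> * dag (D k) = 0\<^sub>m N N"
  shows "lindblad N m D \<rho> = 0\<^sub>m N N"
proof -
  have term0: "D k * \<rho> * dag (D k) - (1/2 :: complex) \<cdot>\<^sub>m (dag (D k) * D k * \<rho> + \<rho> * (dag (D k) * D k))
     = 0\<^sub>m N N - (1/2 :: complex) \<cdot>\<^sub>m (0\<^sub>m N N + 0\<^sub>m N N)" if k: "k < m" for k
  proof -
    have Dk: "D k \<in> carrier_mat N N" using D k by simp
    have Dd: "dag (D k) \<in> carrier_mat N N" using dag_carrier[OF Dk] .
    have z1: "D k * \<rho> = 0\<^sub>m N N" and z2: "\<rho> * dag (D k) = 0\<^sub>m N N" using z k by auto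
    have a: "D k * \<rho> * dag (D k) = 0\<^sub>m N N" using z1 Dd by simp
    have b: "dag (D k) * D k * \<rho> = 0\<^sub>m N N"
      using assoc_mult_mat[OF Dd Dk r] z1 Dd by simp
    have c: "\<rho> * (dag (D k) * D k) = 0\<^sub>m N N"
      using assoc_mult_mat[OF r Dd Dk, symmetric] z2 Dk by simp
    show ?thesis using a b c by simp
  qed
  show ?thesis
  proof (rule eq_matI)
    fix i j assume ij: "i < dim_row (0\<^sub>m N N)" "j < dim_col (0\<^sub>m N N)"
    have "lindblad N m D \<rho> $$ (i,j) = (\<Sum>k<m. (0\<^sub>m N N - (1/2 :: complex) \<cdot>\<^sub>m (0\<^sub>m N N + 0\<^sub>m N N)) $$ (i,j))"
      unfolding lindblad_def using ij term0 by simp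
    also have "\<dots> = 0" using ij by simp
    finally show "lindblad N m D \<rho> $$ (i,j) = 0\<^sub>m N N $$ (i,j)" using ij by simp
  qed (auto simp: lindblad_def)
qed

lemma evol_fix: assumes "L \<rho> = 0\<^sub>m N N" "L (0\<^sub>m N N) = 0\<^sub>m N N" "\<rho> \<in> carrier_mat N N"
  shows "evol N L t \<rho> = \<rho>"
proof -
  have pw: "(L ^^ Suc k) \<rho> = 0\<^sub>m N N" for k
    by (induction k) (use assms in auto)
  show ?thesis
  proof (rule eq_matI)
    fix i j assume ij: "i < dim_row \<rho>" "j < dim_col \<rho>"
    have "(\<Sum>k. complex_of_real (t ^ k / fact k) * (L ^^ k) \<rho> $$ (i, j))
        = (\<Sum>k\<in>{0}. complex_of_real (t ^ k / fact k) * (L ^^ k) \<rho> $$ (i, j))"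
    proof (rule suminf_finite)
      fix k :: nat assume "k \<notin> {0}"
      then obtain k' where "k = Suc k'" by (cases k) auto
      then show "complex_of_real (t ^ k / fact k) * (L ^^ k) \<rho> $$ (i, j) = 0"
        using pw ij assms(3) by simp
    qed simp
    then show "evol N L t \<rho> $$ (i, j) = \<rho> $$ (i, j)"
      unfolding evol_def using ij assms(3) by simp
  qed (use assms in \<open>auto simp: evol_def\<close>)
qed

lemma D_kills_Q: assumes D: "D \<in> carrier_mat N N" and psi: "\<Psi> \<in> carrier_vec N"
  and z: "D *\<^sub>v \<Psi> = 0\<^sub>v N"
  shows "D * ket_bra \<Psi> = 0\<^sub>m N N" "ket_bra \<Psi> * dag D = 0\<^sub>m N N"
proof -
  have Dz: "(\<Sum>l<N. D $$ (i,l) * \<Psi>$l) = 0" if "i < N" for i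
    using mv_idx[OF D psi that] z that by simp
  show "D * ket_bra \<Psi> = 0\<^sub>m N N"
  proof (rule eq_matI)
    fix i j assume ij: "i < dim_row (0\<^sub>m N N)" "j < dim_col (0\<^sub>m N N)"
    then have "(D * ket_bra \<Psi>) $$ (i,j) = (\<Sum>l<N. D $$ (i,l) * (\<Psi>$l * cnj (\<Psi>$j)))"
      using mm_idx[OF D Q_carrier[OF psi]] psi by (simp add: Q_entry del: index_mult_mat)
    also have "\<dots> = (\<Sum>l<N. D $$ (i,l) * \<Psi>$l) * cnj (\<Psi>$j)"
      by (simp add: sum_distrib_right mult.assoc)
    finally show "(D * ket_bra \<Psi>) $$ (i,j) = 0\<^sub>m N N $$ (i,j)" using Dz ij by simp
  qed (use D psi in \<open>auto simp: ket_bra_def\<close>)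
  show "ket_bra \<Psi> * dag D = 0\<^sub>m N N"
  proof (rule eq_matI)
    fix i j assume ij: "i < dim_row (0\<^sub>m N N)" "j < dim_col (0\<^sub>m N N)"
    then have "(ket_bra \<Psi> * dag D) $$ (i,j) = (\<Sum>l<N. \<Psi>$i * cnj (\<Psi>$l) * cnj (D $$ (j,l)))"
      using mm_idx[OF Q_carrier[OF psi] dag_carrier[OF D]] psi D
      by (auto simp: Q_entry dag_def intro!: sum.cong simp del: index_mult_mat)
    also have "\<dots> = \<Psi>$i * cnj (\<Sum>l<N. D $$ (j,l) * \<Psi>$l)"
      by (simp add: sum_distrib_left cnj_sum mult.commute mult.left_commute)
    finally show "(ket_bra \<Psi> * dag D) $$ (i,j) = 0\<^sub>m N N $$ (i,j)" using Dz[of j] ij by (simp del: cnj_sum)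
  qed (use D psi in \<open>auto simp: ket_bra_def dag_def\<close>)
qed

lemma ip_lin: assumes "w \<in> carrier_vec N" "u \<in> carrier_vec N" "y \<in> carrier_vec N"
  shows "ip w (a \<cdot>\<^sub>v u + b \<cdot>\<^sub>v y) = a * ip w u + b * ip w y"
  unfolding ip_def using assms
  by (simp add: sum.distrib sum_distrib_left algebra_simps)

lemma mv_lin: fixes A :: "complex mat" assumes "A \<in> carrier_mat N N" "u \<in> carrier_vec N" "y \<in> carrier_vec N" "i < N"
  shows "(A *\<^sub>v (a \<cdot>\<^sub>v u + b \<cdot>\<^sub>v y)) $ i = a * (A *\<^sub>v u) $ i + b * (A *\<^sub>v y) $ i"
proof -
  have "A *\<^sub>v (a \<cdot>\<^sub>v u + b \<cdot>\<^sub>v y) = a \<cdot>\<^sub>v (A *\<^sub>v u) + b \<cdot>\<^sub>v (A *\<^sub>v y)"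
    using assms mult_mat_vec[OF assms(1) assms(2)] mult_mat_vec[OF assms(1) assms(3)]
    by (simp add: mult_add_distrib_mat_vec)
  then show ?thesis using assms by simp
qed

lemma inv_Suc_conv: assumes "\<forall>k. cmod (X k - L) < 1 / real (Suc k)"
  shows "X \<longlonglongrightarrow> L"
proof (rule LIMSEQ_I)
  fix r :: real assume r: "0 < r"
  obtain n0 where n0: "inverse (real (Suc n0)) < r" using reals_Archimedean[OF r] by blast
  show "\<exists>no. \<forall>n\<ge>no. norm (X n - L) < r"
  proof (intro exI allI impI)
    fix n assume "n \<ge> n0"
    then have "1 / real (Suc n) \<le> 1 / real (Suc n0)" by (simp add: frac_le)
    moreover have "cmod (X n - L) < 1 / real (Suc n)" using assms by blast
    moreover have "1 / real (Suc n0) < r" using n0 by (simp add: inverse_eq_divide)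
    ultimately show "norm (X n - L) < r" by simp
  qed
qed

lemma L3:
  assumes psi: "\<Psi> \<in> carrier_vec N" "ip \<Psi> \<Psi> = 1"
    and K0c: "K0 \<subseteq> carrier_vec N"
    and lin: "\<forall>u\<in>K0. \<forall>y\<in>K0. \<forall>a b. a \<cdot>\<^sub>v u + b \<cdot>\<^sub>v y \<in> K0"
    and orth: "\<forall>h\<in>H'. \<forall>x\<in>K0. ip \<Psi> x = 0 \<longrightarrow> ip x h = 0"
    and approx: "\<forall>e>0. \<exists>\<sigma>\<in>density_ops N K0. \<forall>i<N. \<forall>j<N. cmod (\<sigma>$$(i,j) - ket_bra \<Psi> $$(i,j)) < e"
    and rho: "\<rho> \<in> density_ops N H'"
    and u: "u \<in> K0"
  shows "\<rho> *\<^sub>v u = ip \<Psi> u \<cdot>\<^sub>v (\<rho> *\<^sub>v \<Psi>)"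
proof -
  note rc = dens_D(1)[OF rho]
  have uc: "u \<in> carrier_vec N" using u K0c by auto
  have "\<forall>k::nat. \<exists>\<sigma>. \<sigma> \<in> density_ops N K0 \<and> (\<forall>i<N. \<forall>j<N. cmod (\<sigma>$$(i,j) - ket_bra \<Psi> $$(i,j)) < 1 / real (Suc k))"
  proof
    fix k :: nat
    have "(0::real) < 1 / real (Suc k)" by simp
    then show "\<exists>\<sigma>. \<sigma> \<in> density_ops N K0 \<and> (\<forall>i<N. \<forall>j<N. cmod (\<sigma>$$(i,j) - ket_bra \<Psi> $$(i,j)) < 1 / real (Suc k))"
      using approx by blast
  qed
  then obtain \<sigma> where \<sigma>: "\<And>k. \<sigma> k \<in> density_ops N K0"
    "\<And>k i j. i < N \<Longrightarrow> j < N \<Longrightarrow> cmod (\<sigma> k $$(i,j) - ket_bra \<Psi> $$(i,j)) < 1 / real (Suc k)"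
    by metis
  have sconv: "(\<lambda>k. \<sigma> k $$ (i,j)) \<longlonglongrightarrow> \<Psi>$i * cnj (\<Psi>$j)" if "i < N" "j < N" for i j
    using inv_Suc_conv[of "\<lambda>k. \<sigma> k $$ (i,j)"] \<sigma>(2)[OF that] Q_entry[OF psi(1) that] by simp
  define y where "y k = \<sigma> k *\<^sub>v \<Psi>" for k
  have sc: "\<sigma> k \<in> carrier_mat N N" for k using dens_D(1)[OF \<sigma>(1)] .
  have yc: "y k \<in> carrier_vec N" for k using sc[of k] psi(1) unfolding y_def by simp
  have yK: "y k \<in> K0" for k using dens_D(5)[OF \<sigma>(1)] psi unfolding y_def supp_def by blast
  have yconv: "(\<lambda>k. y k $ j) \<longlonglongrightarrow> \<Psi>$j" if j: "j < N" for j
  proof -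
    have "(\<lambda>k. \<Sum>l<N. \<sigma> k $$ (j,l) * \<Psi>$l) \<longlonglongrightarrow> (\<Sum>l<N. \<Psi>$j * cnj (\<Psi>$l) * \<Psi>$l)"
      by (intro tendsto_sum tendsto_mult tendsto_const sconv) (use j in auto)
    also have "(\<Sum>l<N. \<Psi>$j * cnj (\<Psi>$l) * \<Psi>$l) = \<Psi>$j * ip \<Psi> \<Psi>"
      unfolding ip_def using psi by (simp add: sum_distrib_left mult.assoc)
    finally show ?thesis using psi j mv_idx[OF sc psi(1) j] unfolding y_def by simp
  qed
  have ipconv: "(\<lambda>k. ip \<Psi> (y k)) \<longlonglongrightarrow> 1"
  proof -
    have "(\<lambda>k. \<Sum>j<N. cnj (\<Psi>$j) * y k $ j) \<longlonglongrightarrow> (\<Sum>j<N. cnj (\<Psi>$j) * \<Psi> $ j)"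
      by (intro tendsto_sum tendsto_mult tendsto_const yconv) auto
    then show ?thesis using psi unfolding ip_def by simp
  qed
  show ?thesis
  proof (rule eq_vecI)
    fix i assume "i < dim_vec (ip \<Psi> u \<cdot>\<^sub>v (\<rho> *\<^sub>v \<Psi>))"
    then have i: "i < N" using rc by simp
    have ryconv: "(\<lambda>k. (\<rho> *\<^sub>v y k) $ i) \<longlonglongrightarrow> (\<rho> *\<^sub>v \<Psi>) $ i"
    proof -
      have "(\<lambda>k. \<Sum>l<N. \<rho> $$ (i,l) * y k $ l) \<longlonglongrightarrow> (\<Sum>l<N. \<rho> $$ (i,l) * \<Psi> $ l)"
        by (intro tendsto_sum tendsto_mult tendsto_const yconv) auto
      then show ?thesis using mv_idx[OF rc yc i] mv_idx[OF rc psi(1) i] by simp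
    qed
    have key: "ip \<Psi> (y k) * (\<rho> *\<^sub>v u) $ i = ip \<Psi> u * (\<rho> *\<^sub>v y k) $ i" for k
    proof -
      define x where "x = ip \<Psi> (y k) \<cdot>\<^sub>v u + (- ip \<Psi> u) \<cdot>\<^sub>v y k"
      have xK: "x \<in> K0" using lin u yK unfolding x_def by blast
      have xc: "x \<in> carrier_vec N" using xK K0c by auto
      have "ip \<Psi> x = 0" unfolding x_def using ip_lin[OF psi(1) uc yc] by simp
      then have "\<forall>h\<in>H'. ip x h = 0" using orth xK by blast
      then have "\<rho> *\<^sub>v x = 0\<^sub>v N" using kill[OF rho xc] by simp
      then have "(\<rho> *\<^sub>v x) $ i = 0" using i by simp
      then show ?thesis unfolding x_def using mv_lin[OF rc uc yc i] by simp
    qed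
    have l1: "(\<lambda>k. ip \<Psi> (y k) * (\<rho> *\<^sub>v u) $ i) \<longlonglongrightarrow> 1 * (\<rho> *\<^sub>v u) $ i"
      by (intro tendsto_mult ipconv tendsto_const)
    have l2: "(\<lambda>k. ip \<Psi> (y k) * (\<rho> *\<^sub>v u) $ i) \<longlonglongrightarrow> ip \<Psi> u * (\<rho> *\<^sub>v \<Psi>) $ i"
      unfolding key by (intro tendsto_mult ryconv tendsto_const)
    have "(\<rho> *\<^sub>v u) $ i = ip \<Psi> u * (\<rho> *\<^sub>v \<Psi>) $ i"
      using LIMSEQ_unique[OF l1 l2] by simp
    then show "(\<rho> *\<^sub>v u) $ i = (ip \<Psi> u \<cdot>\<^sub>v (\<rho> *\<^sub>v \<Psi>)) $ i" using i rc psi by simp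
  qed (use rc uc psi in simp)
qed

lemma bdd_zero: fixes f g :: "'b \<Rightarrow> complex"
  assumes "\<forall>x. cmod (f x) \<le> B" "(g \<longlongrightarrow> 0) F"
  shows "((\<lambda>x. f x * g x) \<longlongrightarrow> 0) F"
proof (rule tendsto_0_le[OF assms(2), of _ B])
  show "\<forall>\<^sub>F x in F. norm (f x * g x) \<le> norm (g x) * B"
  proof (intro always_eventually allI)
    fix x
    have "norm (f x * g x) = cmod (f x) * cmod (g x)" by (simp add: norm_mult)
    also have "\<dots> \<le> B * cmod (g x)" using assms(1) by (intro mult_right_mono) auto
    finally show "norm (f x * g x) \<le> norm (g x) * B" by (simp add: mult.commute)
  qed
qed

lemma main_lim:
  assumes psi: "\<Psi> \<in> carrier_vec N" "ip \<Psi> \<Psi> = 1"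
    and r: "\<forall>x. r x \<in> density_ops N H'"
    and s: "\<forall>x. s x \<in> density_ops N K0"
    and diff: "\<forall>i<N. \<forall>j<N. ((\<lambda>x. r x $$ (i,j) - s x $$ (i,j)) \<longlongrightarrow> 0) F"
    and ident: "\<forall>\<rho>\<in>density_ops N H'. \<forall>u\<in>K0. \<rho> *\<^sub>v u = ip \<Psi> u \<cdot>\<^sub>v (\<rho> *\<^sub>v \<Psi>)"
  shows "\<forall>i<N. \<forall>j<N. ((\<lambda>x. r x $$ (i,j)) \<longlongrightarrow> \<Psi>$i * cnj (\<Psi>$j)) F"
proof -
  define R where "R x i j = r x $$ (i,j)" for x i j
  define S where "S x i j = s x $$ (i,j)" for x i j
  define a where "a x i = (\<Sum>l<N. R x i l * \<Psi>$l)" for x i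
  define g where "g x j = (\<Sum>l<N. cnj (\<Psi>$l) * S x l j)" for x j
  define B where "B = (\<Sum>l<N. cmod (\<Psi>$l))"
  have rc: "r x \<in> carrier_mat N N" for x using dens_D(1) r by blast
  have sc: "s x \<in> carrier_mat N N" for x using dens_D(1) s by blast
  have Rb: "cmod (R x i j) \<le> 1" if "i<N" "j<N" for x i j
    unfolding R_def using dens_bound r that by blast
  have Rh: "R x i j = cnj (R x j i)" if "i<N" "j<N" for x i j
    unfolding R_def using herm_entry[OF dens_D(2)[OF r[rule_format]] rc that] .
  have ab: "cmod (a x i) \<le> B" if "i<N" for x i
  proof -
    have "cmod (a x i) \<le> (\<Sum>l<N. cmod (R x i l * \<Psi>$l))" unfolding a_def by (rule norm_sum)
    also have "\<dots> \<le> (\<Sum>l<N. cmod (\<Psi>$l))"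
    proof (rule sum_mono)
      fix l assume "l \<in> {..<N}"
      then have "cmod (R x i l) \<le> 1" using Rb that by simp
      then show "cmod (R x i l * \<Psi>$l) \<le> cmod (\<Psi>$l)"
        by (simp add: norm_mult mult_left_le_one_le)
    qed
    finally show ?thesis unfolding B_def .
  qed
  have cnja: "cnj (a x i) = (\<Sum>l<N. R x l i * cnj (\<Psi>$l))" if "i<N" for x i
    unfolding a_def cnj_sum
  proof (intro sum.cong refl)
    fix l assume "l \<in> {..<N}"
    then have "R x l i = cnj (R x i l)" using Rh[of l i x] that by simp
    then show "cnj (R x i l * \<Psi>$l) = R x l i * cnj (\<Psi>$l)" by simp
  qed
  have IDn: "(\<Sum>l<N. R x i l * S x l j) = g x j * a x i" if "i<N" "j<N" for x i j
  proof -
    define u where "u = s x *\<^sub>v unit_vec N j"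
    have "unit_vec N j \<in> carrier_vec N" by simp
    then have uK: "u \<in> K0" using dens_D(5)[OF s[rule_format, of x]] unfolding u_def supp_def by blast
    have uc: "u \<in> carrier_vec N" using sc[of x] unfolding u_def by simp
    have ue: "u $ l = S x l j" if "l < N" for l
      unfolding u_def S_def using mv_unit[OF sc \<open>j<N\<close> that] .
    have e: "r x *\<^sub>v u = ip \<Psi> u \<cdot>\<^sub>v (r x *\<^sub>v \<Psi>)" using ident r uK by blast
    have "(r x *\<^sub>v u) $ i = (\<Sum>l<N. R x i l * S x l j)"
      unfolding R_def using mv_idx[OF rc uc \<open>i<N\<close>] ue by simp
    moreover have "(ip \<Psi> u \<cdot>\<^sub>v (r x *\<^sub>v \<Psi>)) $ i = g x j * a x i"
      using mv_idx[OF rc psi(1) \<open>i<N\<close>] \<open>i<N\<close> rc[of x] psi ue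
      unfolding g_def a_def R_def ip_def by simp
    ultimately show ?thesis using e by simp
  qed
  define Z where "Z x = (\<Sum>i<N. \<Sum>l<N. R x i l * R x l i) - (\<Sum>i<N. cnj (a x i) * a x i)" for x
  have Zlim: "(Z \<longlongrightarrow> 0) F"
  proof -
    have Zeq: "Z x = (\<Sum>i<N. \<Sum>l<N. R x i l * (R x l i - S x l i)) + (\<Sum>i<N. (g x i - cnj (a x i)) * a x i)" for x
    proof -
      have "(\<Sum>i<N. \<Sum>l<N. R x i l * S x l i) = (\<Sum>i<N. g x i * a x i)"
        using IDn by (intro sum.cong) auto
      then show ?thesis unfolding Z_def
        by (simp add: right_diff_distrib left_diff_distrib sum_subtractf)
    qed
    have t1: "((\<lambda>x. \<Sum>i<N. \<Sum>l<N. R x i l * (R x l i - S x l i)) \<longlongrightarrow> 0) F"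
    proof (intro tendsto_null_sum bdd_zero)
      fix i l assume "i \<in> {..<N}" "l \<in> {..<N}"
      then show "\<forall>x. cmod (R x i l) \<le> 1" "((\<lambda>x. R x l i - S x l i) \<longlongrightarrow> 0) F"
        using Rb diff unfolding R_def S_def by auto
    qed
    have t2: "((\<lambda>x. \<Sum>i<N. (g x i - cnj (a x i)) * a x i) \<longlongrightarrow> 0) F"
    proof (rule tendsto_null_sum)
      fix i assume i: "i \<in> {..<N}"
      have ge: "g x i - cnj (a x i) = - (\<Sum>l<N. cnj (\<Psi>$l) * (R x l i - S x l i))" for x
        using cnja[of i x] i unfolding g_def
        by (simp add: sum_subtractf[symmetric] algebra_simps sum_negf[symmetric])
      have "((\<lambda>x. - (\<Sum>l<N. cnj (\<Psi>$l) * (R x l i - S x l i))) \<longlongrightarrow> - 0) F"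
        by (intro tendsto_minus tendsto_null_sum tendsto_mult_right_zero)
           (use diff i in \<open>auto simp: R_def S_def\<close>)
      then have "((\<lambda>x. g x i - cnj (a x i)) \<longlongrightarrow> 0) F" unfolding ge by simp
      then have "((\<lambda>x. a x i * (g x i - cnj (a x i))) \<longlongrightarrow> 0) F"
        using bdd_zero[of "\<lambda>x. a x i" B] ab i by auto
      then show "((\<lambda>x. (g x i - cnj (a x i)) * a x i) \<longlongrightarrow> 0) F" by (simp add: mult.commute)
    qed
    show ?thesis unfolding Zeq[abs_def] using tendsto_add[OF t1 t2] by simp
  qed
  define M where "M x i j = R x i j - \<Psi>$i * cnj (a x j)" for x i j
  define S2 where "S2 x = (\<Sum>i<N. \<Sum>j<N. (cmod (M x i j))^2)" for x
  have S2Z: "complex_of_real (S2 x) = Z x" for x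
  proof -
    define X where "X = (\<Sum>j<N. a x j * cnj (a x j))"
    have "complex_of_real (S2 x) = (\<Sum>i<N. \<Sum>j<N. cnj (M x i j) * M x i j)"
      unfolding S2_def by (simp add: cnj_mult_self)
    also have "\<dots> = (\<Sum>i<N. \<Sum>j<N. R x j i * R x i j - R x j i * \<Psi>$i * cnj (a x j)
         - cnj (\<Psi>$i) * a x j * R x i j + cnj (\<Psi>$i) * \<Psi>$i * (a x j * cnj (a x j)))"
    proof (intro sum.cong refl)
      fix i j assume "i \<in> {..<N}" "j \<in> {..<N}"
      then have "cnj (R x i j) = R x j i" using Rh[of j i x] by simp
      then show "cnj (M x i j) * M x i j = R x j i * R x i j - R x j i * \<Psi>$i * cnj (a x j)
         - cnj (\<Psi>$i) * a x j * R x i j + cnj (\<Psi>$i) * \<Psi>$i * (a x j * cnj (a x j))"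
        unfolding M_def by (simp add: algebra_simps)
    qed
    also have "\<dots> = (\<Sum>i<N. \<Sum>j<N. R x j i * R x i j) - (\<Sum>i<N. \<Sum>j<N. R x j i * \<Psi>$i * cnj (a x j))
         - (\<Sum>i<N. \<Sum>j<N. cnj (\<Psi>$i) * a x j * R x i j) + (\<Sum>i<N. \<Sum>j<N. cnj (\<Psi>$i) * \<Psi>$i * (a x j * cnj (a x j)))"
      by (simp add: sum.distrib sum_subtractf)
    also have "(\<Sum>i<N. \<Sum>j<N. R x j i * R x i j) = (\<Sum>i<N. \<Sum>l<N. R x i l * R x l i)"
      by (subst sum.swap) (simp add: mult.commute)
    also have "(\<Sum>i<N. \<Sum>j<N. R x j i * \<Psi>$i * cnj (a x j)) = X"
    proof -
      have "(\<Sum>i<N. \<Sum>j<N. R x j i * \<Psi>$i * cnj (a x j)) = (\<Sum>j<N. (\<Sum>i<N. R x j i * \<Psi>$i) * cnj (a x j))"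
        by (subst sum.swap) (simp add: sum_distrib_right)
      then show ?thesis unfolding X_def a_def by simp
    qed
    also have "(\<Sum>i<N. \<Sum>j<N. cnj (\<Psi>$i) * a x j * R x i j) = X"
    proof -
      have "(\<Sum>i<N. \<Sum>j<N. cnj (\<Psi>$i) * a x j * R x i j) = (\<Sum>j<N. a x j * (\<Sum>i<N. R x i j * cnj (\<Psi>$i)))"
        by (subst sum.swap) (simp add: sum_distrib_left mult.commute mult.left_commute)
      also have "\<dots> = X" unfolding X_def using cnja by (intro sum.cong) auto
      finally show ?thesis .
    qed
    also have "(\<Sum>i<N. \<Sum>j<N. cnj (\<Psi>$i) * \<Psi>$i * (a x j * cnj (a x j))) = ip \<Psi> \<Psi> * X"
      unfolding X_def ip_def using psi(1) by (simp add: sum_product)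
    also have "(\<Sum>i<N. cnj (a x i) * a x i) = X" unfolding X_def by (simp add: mult.commute)
    ultimately show ?thesis unfolding Z_def using psi(2) by simp
  qed
  have S2lim: "(S2 \<longlongrightarrow> 0) F"
  proof -
    have "((\<lambda>x. Re (Z x)) \<longlongrightarrow> Re 0) F" by (intro tendsto_Re Zlim)
    moreover have "Re (Z x) = S2 x" for x using S2Z[of x] by (metis Re_complex_of_real)
    ultimately show ?thesis by simp
  qed
  have Mlim: "((\<lambda>x. M x i j) \<longlongrightarrow> 0) F" if ij: "i<N" "j<N" for i j
  proof -
    have le: "(cmod (M x i j))^2 \<le> S2 x" for x
    proof -
      have "(cmod (M x i j))^2 \<le> (\<Sum>j'<N. (cmod (M x i j'))^2)"
        using ij by (intro member_le_sum) auto
      also have "\<dots> \<le> S2 x" unfolding S2_def using ij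
        by (intro member_le_sum[of i "{..<N}" "\<lambda>i. \<Sum>j<N. (cmod (M x i j))^2"]) (auto intro: sum_nonneg)
      finally show ?thesis .
    qed
    have "((\<lambda>x. (cmod (M x i j))^2) \<longlongrightarrow> 0) F"
      by (rule tendsto_sandwich[OF _ _ tendsto_const S2lim]) (use le in auto)
    from tendsto_real_sqrt[OF this] have "((\<lambda>x. cmod (M x i j)) \<longlongrightarrow> 0) F" by simp
    then show ?thesis by (simp add: tendsto_norm_zero_iff)
  qed
  define c where "c x = (\<Sum>l<N. cnj (a x l) * \<Psi>$l)" for x
  have clim: "(c \<longlongrightarrow> 1) F"
  proof -
    have ceq: "c x = 1 - (\<Sum>i<N. M x i i)" for x
    proof -
      have "(\<Sum>i<N. R x i i) = 1" unfolding R_def using dens_D(4) r by blast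
      moreover have "(\<Sum>i<N. R x i i) = (\<Sum>i<N. M x i i) + c x"
        unfolding M_def c_def by (simp add: sum_subtractf mult.commute)
      ultimately show ?thesis by (simp add: algebra_simps)
    qed
    have "((\<lambda>x. 1 - (\<Sum>i<N. M x i i)) \<longlongrightarrow> 1 - 0) F"
      by (intro tendsto_diff tendsto_const tendsto_null_sum Mlim) auto
    then show ?thesis unfolding ceq[abs_def] by simp
  qed
  have alim: "((\<lambda>x. a x j) \<longlongrightarrow> \<Psi>$j) F" if j: "j<N" for j
  proof -
    have aeq0: "(\<Sum>l<N. M x j l * \<Psi>$l) = a x j - \<Psi>$j * c x" for x
      unfolding M_def c_def a_def[of x j]
      by (simp add: left_diff_distrib sum_subtractf sum_distrib_left mult.assoc)
    have aeq: "a x j = (\<Sum>l<N. M x j l * \<Psi>$l) + \<Psi>$j * c x" for x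
      using aeq0[of x] by simp
    have "((\<lambda>x. (\<Sum>l<N. M x j l * \<Psi>$l) + \<Psi>$j * c x) \<longlongrightarrow> 0 + \<Psi>$j * 1) F"
      by (intro tendsto_add tendsto_null_sum tendsto_mult_left_zero tendsto_mult tendsto_const clim Mlim)
         (use j in auto)
    then show ?thesis unfolding aeq[abs_def] by simp
  qed
  show ?thesis
  proof (intro allI impI)
    fix i j assume ij: "i<N" "j<N"
    have req: "r x $$ (i,j) = M x i j + \<Psi>$i * cnj (a x j)" for x unfolding M_def R_def by simp
    have "((\<lambda>x. M x i j + \<Psi>$i * cnj (a x j)) \<longlongrightarrow> 0 + \<Psi>$i * cnj (\<Psi>$j)) F"
      by (intro tendsto_add tendsto_mult tendsto_const tendsto_cnj Mlim alim ij)
    then show "((\<lambda>x. r x $$ (i,j)) \<longlongrightarrow> \<Psi>$i * cnj (\<Psi>$j)) F" unfolding req by simp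
  qed
qed

theorem theorem3:
  fixes n m :: nat and d :: "nat \<Rightarrow> nat" and Nb :: "nat \<Rightarrow> nat set"
    and D :: "nat \<Rightarrow> complex mat" and \<Psi> :: "complex vec" and H' :: "complex vec set"
  assumes dims: "\<forall>a<n. 0 < d a"
    and nbhd: "\<forall>k<m. Nb k \<subset> {..<n}"
    and psi: "\<Psi> \<in> carrier_vec (tdim n d)" "ip \<Psi> \<Psi> = 1"
    and QL: "\<forall>k<m. is_QL n d (Nb k) (D k)"
    and ann: "\<forall>k<m. D k *\<^sub>v \<Psi> = 0\<^sub>v (tdim n d)"
    and GAS: "\<forall>\<rho>0 \<in> density_ops (tdim n d) (carrier_vec (tdim n d)).
               mat_tendsto_set (tdim n d) (\<lambda>t. evol (tdim n d) (lindblad (tdim n d) m D) t \<rho>0)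
                 (density_ops (tdim n d) (H0 n d m Nb \<Psi>))"
    and sub: "is_subspace (tdim n d) H'"
    and Hd_sub: "Hd \<Psi> \<subseteq> H'"
    and sub_Hw: "H' \<subseteq> ortho_compl (tdim n d) (Hw n d m Nb \<Psi>)"
    and inv: "\<forall>\<rho>0 \<in> density_ops (tdim n d) H'. \<forall>t\<ge>0.
               evol (tdim n d) (lindblad (tdim n d) m D) t \<rho>0 \<in> density_ops (tdim n d) H'"
  shows "cond_asym_stable (tdim n d) (lindblad (tdim n d) m D) (ket_bra \<Psi>) H'"
proof -
  define N where "N = tdim n d"
  define L where "L = lindblad N m D"
  define Q where "Q = ket_bra \<Psi>"
  define K0 where "K0 = H0 n d m Nb \<Psi>"
  have psiN: "\<Psi> \<in> carrier_vec N" using psi(1) unfolding N_def .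
  have Dc: "\<forall>k<m. D k \<in> carrier_mat N N" using QL unfolding is_QL_def N_def by blast
  have Qd: "Q \<in> density_ops N (carrier_vec N)" unfolding Q_def by (rule Q_dens[OF psiN psi(2)])
  have Qc: "Q \<in> carrier_mat N N" unfolding Q_def using Q_carrier[OF psiN] .
  have LQ: "L Q = 0\<^sub>m N N" unfolding L_def Q_def
    by (rule lind_zero[OF Dc Q_carrier[OF psiN]])
       (use D_kills_Q[OF _ psiN] Dc ann N_def in auto)
  have L0: "L (0\<^sub>m N N) = 0\<^sub>m N N" unfolding L_def
  proof (rule lind_zero[OF Dc zero_carrier_mat], intro allI impI conjI)
    fix k assume k: "k < m"
    then have Dk: "D k \<in> carrier_mat N N" using Dc by simp
    show "D k * 0\<^sub>m N N = 0\<^sub>m N N" using Dk by simp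
    show "0\<^sub>m N N * dag (D k) = 0\<^sub>m N N" using dag_carrier[OF Dk] by simp
  qed
  have evQ: "evol N L t Q = Q" for t by (rule evol_fix[OF LQ L0 Qc])
  have dens_sub: "density_ops N H' \<subseteq> density_ops N (carrier_vec N)"
    unfolding density_ops_def supp_def by auto
  have approx: "\<forall>e>0. \<exists>\<sigma>\<in>density_ops N K0. \<forall>i<N. \<forall>j<N. cmod (\<sigma>$$(i,j) - ket_bra \<Psi> $$(i,j)) < e"
  proof (intro allI impI)
    fix e :: real assume e: "e > 0"
    have "mat_tendsto_set N (\<lambda>t. evol N L t Q) (density_ops N K0)"
      using GAS Qd unfolding N_def L_def K0_def by blast
    then obtain T where "\<forall>t\<ge>T. \<exists>\<sigma>\<in>density_ops N K0. \<forall>i<N. \<forall>j<N. cmod (evol N L t Q $$ (i,j) - \<sigma> $$ (i,j)) < e"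
      using e unfolding mat_tendsto_set_def by blast
    then obtain \<sigma> where "\<sigma> \<in> density_ops N K0" "\<forall>i<N. \<forall>j<N. cmod (Q $$ (i,j) - \<sigma> $$ (i,j)) < e"
      using evQ by auto
    then show "\<exists>\<sigma>\<in>density_ops N K0. \<forall>i<N. \<forall>j<N. cmod (\<sigma>$$(i,j) - ket_bra \<Psi> $$(i,j)) < e"
      unfolding Q_def by (metis norm_minus_commute)
  qed
  have K0c: "K0 \<subseteq> carrier_vec N" unfolding K0_def H0_def N_def by auto
  have lin: "\<forall>u\<in>K0. \<forall>y\<in>K0. \<forall>a b. a \<cdot>\<^sub>v u + b \<cdot>\<^sub>v y \<in> K0"
  proof (intro ballI allI)
    fix u y a b assume u: "u \<in> K0" and y: "y \<in> K0"
    have uc: "u \<in> carrier_vec N" and yc: "y \<in> carrier_vec N" using u y K0c by auto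
    have "a \<cdot>\<^sub>v u + b \<cdot>\<^sub>v y \<in> supp N (red_ext n d (Nb k) (ket_bra \<Psi>))" if k: "k < m" for k
    proof -
      define A where "A = red_ext n d (Nb k) (ket_bra \<Psi>)"
      have Ac: "A \<in> carrier_mat N N" unfolding A_def red_ext_def N_def by simp
      obtain v1 where v1: "v1 \<in> carrier_vec N" "u = A *\<^sub>v v1"
        using u k unfolding K0_def H0_def supp_def A_def N_def by blast
      obtain v2 where v2: "v2 \<in> carrier_vec N" "y = A *\<^sub>v v2"
        using y k unfolding K0_def H0_def supp_def A_def N_def by blast
      have "A *\<^sub>v (a \<cdot>\<^sub>v v1 + b \<cdot>\<^sub>v v2) = a \<cdot>\<^sub>v u + b \<cdot>\<^sub>v y"
        using v1 v2 Ac mult_mat_vec[OF Ac v1(1)] mult_mat_vec[OF Ac v2(1)]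
        by (simp add: mult_add_distrib_mat_vec)
      moreover have "a \<cdot>\<^sub>v v1 + b \<cdot>\<^sub>v v2 \<in> carrier_vec N" using v1 v2 by simp
      ultimately show ?thesis unfolding supp_def A_def
        by (intro CollectI exI[of _ "a \<cdot>\<^sub>v v1 + b \<cdot>\<^sub>v v2"]) simp
    qed
    moreover have "a \<cdot>\<^sub>v u + b \<cdot>\<^sub>v y \<in> carrier_vec N" using uc yc by simp
    ultimately show "a \<cdot>\<^sub>v u + b \<cdot>\<^sub>v y \<in> K0" unfolding K0_def H0_def N_def by auto
  qed
  have orth: "\<forall>h\<in>H'. \<forall>x\<in>K0. ip \<Psi> x = 0 \<longrightarrow> ip x h = 0"
  proof (intro ballI impI)
    fix h x assume h: "h \<in> H'" and x: "x \<in> K0" and z: "ip \<Psi> x = 0"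
    have xc: "x \<in> carrier_vec N" using x K0c by auto
    have "ip w x = 0" if wH: "w \<in> Hd \<Psi>" for w
    proof -
      obtain c where w: "w = c \<cdot>\<^sub>v \<Psi>" using wH unfolding Hd_def by blast
      have "ip w x = cnj c * ip \<Psi> x" unfolding w ip_def using psiN
        by (simp add: sum_distrib_left mult.assoc)
      then show ?thesis using z by simp
    qed
    then have "x \<in> Hw n d m Nb \<Psi>" using x xc unfolding Hw_def K0_def ortho_compl_def N_def by auto
    then show "ip x h = 0" using sub_Hw h unfolding ortho_compl_def by blast
  qed
  have ident: "\<forall>\<rho>\<in>density_ops N H'. \<forall>u\<in>K0. \<rho> *\<^sub>v u = ip \<Psi> u \<cdot>\<^sub>v (\<rho> *\<^sub>v \<Psi>)"
    using L3[OF psiN psi(2) K0c lin orth approx] by blast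
  show ?thesis
    unfolding cond_asym_stable_def mat_tendsto_def N_def[symmetric] L_def[symmetric]
  proof (intro ballI allI impI)
    fix \<rho>0 i j assume \<rho>0: "\<rho>0 \<in> density_ops N H'" and ij: "i < N" "j < N"
    define r where "r t = evol N L t \<rho>0" for t
    define l where "l = ket_bra \<Psi> $$ (i,j)"
    have lq: "l = \<Psi>$i * cnj (\<Psi>$j)" unfolding l_def using Q_entry[OF psiN ij] .
    have mts: "mat_tendsto_set N r (density_ops N K0)"
      using GAS \<rho>0 dens_sub unfolding N_def L_def K0_def r_def by blast
    show "((\<lambda>t. evol N L t \<rho>0 $$ (i, j)) \<longlongrightarrow> l) at_top"
      unfolding r_def[symmetric]
    proof (rule ccontr)
      assume nt: "\<not> ((\<lambda>t. r t $$ (i, j)) \<longlongrightarrow> l) at_top"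
      then obtain e where e: "e > 0" "\<not> eventually (\<lambda>t. dist (r t $$ (i,j)) l < e) at_top"
        unfolding tendsto_iff by blast
      then have fr: "\<forall>T. \<exists>t\<ge>T. \<not> dist (r t $$ (i,j)) l < e"
        unfolding eventually_at_top_linorder by blast
      have "\<forall>k::nat. \<exists>p. fst p \<ge> 0 \<and> snd p \<in> density_ops N K0 \<and>
          (\<forall>i'<N. \<forall>j'<N. cmod (r (fst p) $$ (i',j') - snd p $$ (i',j')) < 1 / real (Suc k)) \<and>
          \<not> dist (r (fst p) $$ (i,j)) l < e"
      proof
        fix k :: nat
        have "(0::real) < 1 / real (Suc k)" by simp
        then obtain T where T: "\<forall>t\<ge>T. \<exists>\<sigma>\<in>density_ops N K0. \<forall>i'<N. \<forall>j'<N. cmod (r t $$ (i',j') - \<sigma> $$ (i',j')) < 1 / real (Suc k)"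
          using mts unfolding mat_tendsto_set_def by blast
        obtain t where t: "t \<ge> max T 0" "\<not> dist (r t $$ (i,j)) l < e" using fr by blast
        then obtain \<sigma> where "\<sigma> \<in> density_ops N K0" "\<forall>i'<N. \<forall>j'<N. cmod (r t $$ (i',j') - \<sigma> $$ (i',j')) < 1 / real (Suc k)"
          using T by auto
        then show "\<exists>p. fst p \<ge> 0 \<and> snd p \<in> density_ops N K0 \<and>
          (\<forall>i'<N. \<forall>j'<N. cmod (r (fst p) $$ (i',j') - snd p $$ (i',j')) < 1 / real (Suc k)) \<and>
          \<not> dist (r (fst p) $$ (i,j)) l < e"
          using t by (intro exI[of _ "(t, \<sigma>)"]) auto
      qed
      then obtain f where f: "\<And>k. fst (f k) \<ge> 0" "\<And>k. snd (f k) \<in> density_ops N K0"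
        "\<And>k i' j'. i' < N \<Longrightarrow> j' < N \<Longrightarrow> cmod (r (fst (f k)) $$ (i',j') - snd (f k) $$ (i',j')) < 1 / real (Suc k)"
        "\<And>k. \<not> dist (r (fst (f k)) $$ (i,j)) l < e"
        by metis
      define rr where "rr k = r (fst (f k))" for k
      define ss where "ss k = snd (f k)" for k
      have rr: "\<forall>k. rr k \<in> density_ops N H'"
        unfolding rr_def r_def L_def N_def using inv \<rho>0 f(1) unfolding N_def L_def by blast
      have ss: "\<forall>k. ss k \<in> density_ops N K0" unfolding ss_def using f(2) by blast
      have diff: "\<forall>i'<N. \<forall>j'<N. ((\<lambda>k. rr k $$ (i',j') - ss k $$ (i',j')) \<longlongrightarrow> 0) sequentially"
        using inv_Suc_conv f(3) unfolding rr_def ss_def by simp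
      have "\<forall>i'<N. \<forall>j'<N. ((\<lambda>k. rr k $$ (i',j')) \<longlongrightarrow> \<Psi>$i' * cnj (\<Psi>$j')) sequentially"
        by (rule main_lim[OF psiN psi(2) rr ss diff ident])
      then have "(\<lambda>k. rr k $$ (i,j)) \<longlonglongrightarrow> l" using ij lq by simp
      then have "eventually (\<lambda>k. dist (rr k $$ (i,j)) l < e) sequentially"
        using e(1) unfolding tendsto_iff by blast
      then obtain k where "dist (rr k $$ (i,j)) l < e" by (auto simp: eventually_sequentially)
      then show False using f(4) unfolding rr_def by blast
    qed
  qed
qed

end
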